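(* Let $\sigma\subset\mathbb{R}^m$ be an $m$-simplex and $F\colon\sigma\to\mathbb{R}^m$ a $\xi$-distortion map that fixes each vertex of $\sigma$, with $\xi\le1$. Then for every $x\in\sigma$, $$\|x-F(x)\|\le\frac{3\xi L}{t},$$ where $L=L(\sigma)$ and $t=t(\sigma)$.
   Context: $F$ is a $\xi$-distortion map if $\bigl|\|F(x)-F(y)\|-\|x-y\|\bigr|\le\xi\|x-y\|$ for all $x,y$ in the domain. For an $m$-simplex $\sigma$ ($m\ge1$), $L(\sigma)$ is the length of its longest edge, $a(\sigma)$ is its smallest altitude (distance from a vertex to the affine hull of the opposite facet), and its thickness is $t(\sigma)=a(\sigma)/(mL(\sigma))$. *)

theory Defs
  imports "HOL-Analysis.Analysis"
begin

text \<open>A simplex is given by its finite vertex set V (affinely independent);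
the simplex itself is convex hull V, of dimension card V - 1.\<close>

definition distortion_map :: "real \<Rightarrow> 'a::real_normed_vector set \<Rightarrow> ('a \<Rightarrow> 'b::real_normed_vector) \<Rightarrow> bool" where
  "distortion_map \<xi> S F \<longleftrightarrow>
     (\<forall>x\<in>S. \<forall>y\<in>S. \<bar>norm (F x - F y) - norm (x - y)\<bar> \<le> \<xi> * norm (x - y))"

definition simplex_longest_edge :: "'a::real_normed_vector set \<Rightarrow> real" where
  "simplex_longest_edge V = Max {dist u v | u v. u \<in> V \<and> v \<in> V}"

definition simplex_min_altitude :: "'a::real_normed_vector set \<Rightarrow> real" where
  "simplex_min_altitude V = Min ((\<lambda>v. infdist v (affine hull (V - {v}))) ` V)"

definition simplex_thickness :: "'a::real_normed_vector set \<Rightarrow> real" where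
  "simplex_thickness V =
     simplex_min_altitude V / (real (card V - 1) * simplex_longest_edge V)"

end

theory Submission
  imports Defs
begin

lemma coef_bound:
  fixes V :: "'a::euclidean_space set"
  assumes fin: "finite V" and v0V: "v0 \<in> V" and uV: "u \<in> V - {v0}"
    and wdef: "w = (\<Sum>v\<in>V - {v0}. c v *\<^sub>R (-v0 + v))"
    and aa: "a \<le> infdist u (affine hull (V - {u}))"
  shows "\<bar>c u\<bar> * a \<le> norm w"
proof (cases "c u = 0")
  case True
  then show ?thesis by simp
next
  case False
  define p where "p = v0 + (\<Sum>v\<in>V - {v0} - {u}. (- c v / c u) *\<^sub>R (-v0 + v))"
  have split: "w = c u *\<^sub>R (-v0 + u) + (\<Sum>v\<in>V - {v0} - {u}. c v *\<^sub>R (-v0 + v))"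
    unfolding wdef using fin uV by (simp add: sum.remove)
  have "(\<Sum>v\<in>V - {v0} - {u}. (- c v / c u) *\<^sub>R (-v0 + v))
      = (- 1 / c u) *\<^sub>R (\<Sum>v\<in>V - {v0} - {u}. c v *\<^sub>R (-v0 + v))"
    by (simp add: scaleR_sum_right)
  hence "u - p = (1 / c u) *\<^sub>R w"
    unfolding p_def split using False by (simp add: algebra_simps scaleR_add_right)
  hence dup: "dist u p = norm w / \<bar>c u\<bar>"
    by (simp add: dist_norm)
  have "V - {u} = insert v0 (V - {v0} - {u})" using v0V uV by auto
  hence "affine hull (V - {u}) = (\<lambda>x. v0 + x) ` span ((\<lambda>x. - v0 + x) ` (V - {v0} - {u}))"
    by (simp add: affine_hull_insert_span_gen)
  moreover have "(\<Sum>v\<in>V - {v0} - {u}. (- c v / c u) *\<^sub>R (-v0 + v)) \<in> span ((\<lambda>x. - v0 + x) ` (V - {v0} - {u}))"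
    by (intro span_sum span_mul span_base) auto
  ultimately have "p \<in> affine hull (V - {u})" unfolding p_def by blast
  hence "infdist u (affine hull (V - {u})) \<le> norm w / \<bar>c u\<bar>"
    using infdist_le dup by metis
  with aa have "a \<le> norm w / \<bar>c u\<bar>" by linarith
  thus ?thesis using False by (simp add: field_simps)
qed

theorem mainTheorem4:
  fixes V :: "'a::euclidean_space set" and F :: "'a \<Rightarrow> 'a" and \<xi> :: real and x :: 'a
  assumes "\<not> affine_dependent V"
    and "card V = DIM('a) + 1"
    and "distortion_map \<xi> (convex hull V) F"
    and "\<forall>v\<in>V. F v = v"
    and "\<xi> \<le> 1"
    and "x \<in> convex hull V"
  shows "norm (x - F x) \<le> 3 * \<xi> * simplex_longest_edge V / simplex_thickness V"
proof -
  define m where "m = DIM('a)"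
  have m1: "m \<ge> 1" unfolding m_def by (simp add: DIM_positive Suc_leI)
  have "card V > 0" using assms(2) by simp
  hence fin: "finite V" using card_gt_0_iff by blast
  have "V \<noteq> {}" using assms(2) by auto
  then obtain v0 where v0V: "v0 \<in> V" by auto
  define V' where "V' = V - {v0}"
  have cardV': "card V' = m" unfolding V'_def m_def using assms(2) fin v0V by simp
  have "V' \<noteq> {}" using cardV' m1 by auto
  then obtain u0 where u0: "u0 \<in> V'" by auto
  have u0ne: "u0 \<noteq> v0" "u0 \<in> V" using u0 V'_def by auto
  define L where "L = simplex_longest_edge V"
  define a where "a = simplex_min_altitude V"
  have finE: "finite {dist u v | u v. u \<in> V \<and> v \<in> V}"
  proof -
    have "{dist u v | u v. u \<in> V \<and> v \<in> V} = (\<lambda>(u,v). dist u v) ` (V \<times> V)" by auto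
    thus ?thesis using fin by simp
  qed
  have Lge: "\<And>u v. u \<in> V \<Longrightarrow> v \<in> V \<Longrightarrow> dist u v \<le> L"
    unfolding L_def simplex_longest_edge_def using finE by (intro Max_ge) auto
  have Lpos: "L > 0" using Lge[OF u0ne(2) v0V] u0ne(1) zero_less_dist_iff[of u0 v0] by linarith
  have xL: "\<And>v. v \<in> V \<Longrightarrow> norm (x - v) \<le> L"
  proof -
    fix v assume vV: "v \<in> V"
    have "\<forall>y\<in>convex hull V. dist v y \<le> L"
      by (rule convex_on_convex_hull_bound) (auto intro: convex_on_dist Lge[OF vV])
    hence "dist v x \<le> L" using assms(6) by blast
    thus "norm (x - v) \<le> L" by (metis dist_commute dist_norm)
  qed
  have ain: "\<And>v. v \<in> V \<Longrightarrow> a \<le> infdist v (affine hull (V - {v}))"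
    unfolding a_def simplex_min_altitude_def using fin by (intro Min_le) auto
  have apos_each: "\<And>v. v \<in> V \<Longrightarrow> infdist v (affine hull (V - {v})) > 0"
  proof -
    fix v assume vV: "v \<in> V"
    have "v \<notin> affine hull (V - {v})" using assms(1) vV unfolding affine_dependent_def by blast
    moreover have "V - {v} \<noteq> {}" using u0ne v0V by auto
    ultimately show "infdist v (affine hull (V - {v})) > 0"
      by (intro infdist_pos_not_in_closed) auto
  qed
  have apos: "a > 0"
    unfolding a_def simplex_min_altitude_def using fin \<open>V \<noteq> {}\<close> apos_each
    by (subst Min_gr_iff) auto
  have u0h: "u0 \<in> convex hull V" "v0 \<in> convex hull V" using u0ne v0V by (auto intro: hull_inc)
  have "\<bar>norm (F u0 - F v0) - norm (u0 - v0)\<bar> \<le> \<xi> * norm (u0 - v0)"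
    using assms(3) u0h unfolding distortion_map_def by blast
  hence "\<xi> * norm (u0 - v0) \<ge> 0" by (meson abs_ge_zero order_trans)
  moreover have "norm (u0 - v0) > 0" using u0ne(1) by simp
  ultimately have xi0: "\<xi> \<ge> 0" by (simp add: zero_le_mult_iff)
  define w where "w = F x - x"
  define D where "D v = (norm (F x - v))^2 - (norm (x - v))^2" for v
  have Dbound: "\<bar>D v\<bar> \<le> 3 * \<xi> * L^2" if vV: "v \<in> V" for v
  proof -
    have vh: "v \<in> convex hull V" using vV by (auto intro: hull_inc)
    have h: "\<bar>norm (F x - v) - norm (x - v)\<bar> \<le> \<xi> * norm (x - v)"
    proof -
      have "\<bar>norm (F x - F v) - norm (x - v)\<bar> \<le> \<xi> * norm (x - v)"
        using assms(3,6) vh unfolding distortion_map_def by blast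
      thus ?thesis using assms(4) vV by simp
    qed
    define A where "A = norm (x - v)"
    define B where "B = norm (F x - v)"
    have A0: "A \<ge> 0" "A \<le> L" using xL[OF vV] A_def by auto
    have hb: "\<bar>B - A\<bar> \<le> \<xi> * A" using h A_def B_def by simp
    have B0: "B \<ge> 0" using B_def by simp
    have fe: "B^2 - A^2 = (B - A) * (B + A)" by (simp add: power2_eq_square algebra_simps)
    have "\<bar>B^2 - A^2\<bar> = \<bar>B - A\<bar> * (B + A)" using A0 B0
      unfolding fe abs_mult by simp
    also have "\<dots> \<le> (\<xi> * A) * (3 * A)"
    proof (rule mult_mono)
      have "\<xi> * A \<le> 1 * A" using assms(5) A0 by (intro mult_right_mono) auto
      thus "B + A \<le> 3 * A" using hb by linarith
    qed (use hb A0 xi0 B0 in auto)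
    also have "\<dots> = 3 * \<xi> * A^2" by (simp add: power2_eq_square)
    also have "\<dots> \<le> 3 * \<xi> * L^2" using A0 xi0 by (intro mult_left_mono power_mono) auto
    finally show ?thesis unfolding D_def A_def B_def .
  qed
  have Dform: "D v = (norm w)^2 + 2 * (w \<bullet> (x - v))" for v
  proof -
    have e: "F x - v = w + (x - v)" unfolding w_def by simp
    show ?thesis unfolding D_def e power2_norm_eq_inner
      by (simp add: inner_simps inner_commute algebra_simps)
  qed
  define M where "M = 3 * \<xi> * L^2"
  have inner_bd: "\<bar>w \<bullet> (-v0 + v)\<bar> \<le> M" if vV: "v \<in> V" for v
  proof -
    have "D v0 - D v = 2 * (w \<bullet> (-v0 + v))"
      unfolding Dform by (simp add: inner_diff_right inner_add_right algebra_simps)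
    thus ?thesis using Dbound[OF vV] Dbound[OF v0V] unfolding M_def by linarith
  qed
  define E where "E = (\<lambda>x. - v0 + x) ` V'"
  have injE: "inj_on (\<lambda>x. - v0 + x) V'" by (auto intro: inj_onI)
  have indep: "independent E"
    using assms(1) v0V unfolding E_def V'_def by (simp add: affine_dependent_iff_dependent2)
  have cardE: "card E = dim (UNIV :: 'a set)"
    unfolding E_def using injE cardV' by (simp add: card_image m_def dim_UNIV)
  have finV': "finite V'" using fin V'_def by simp
  have finE': "finite E" using finV' E_def by simp
  have "UNIV \<subseteq> span E" using card_eq_dim[of E UNIV] indep cardE finE' by simp
  hence "w \<in> span E" by blast
  then obtain c where cw: "w = (\<Sum>e\<in>E. c e *\<^sub>R e)"
    using span_finite[OF finE'] by auto
  define c' where "c' v = c (- v0 + v)" for v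
  have wsum: "w = (\<Sum>v\<in>V - {v0}. c' v *\<^sub>R (-v0 + v))"
    unfolding cw E_def c'_def V'_def using injE[unfolded V'_def] by (simp add: sum.reindex)
  have cb: "\<bar>c' u\<bar> * a \<le> norm w" if "u \<in> V'" for u
    using coef_bound[OF fin v0V _ wsum ain] that V'_def by auto
  have "(norm w)^2 = w \<bullet> w" by (simp add: power2_norm_eq_inner)
  also have "\<dots> = (\<Sum>v\<in>V'. c' v * (w \<bullet> (-v0 + v)))"
    by (subst (2) wsum) (simp add: inner_sum_right V'_def)
  also have "\<dots> \<le> (\<Sum>v\<in>V'. (norm w / a) * M)"
  proof (rule sum_mono)
    fix v assume vV': "v \<in> V'"
    have "c' v * (w \<bullet> (-v0 + v)) \<le> \<bar>c' v\<bar> * \<bar>w \<bullet> (-v0 + v)\<bar>" by (simp add: abs_mult[symmetric])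
    also have "\<dots> \<le> (norm w / a) * M"
    proof (rule mult_mono)
      show "\<bar>c' v\<bar> \<le> norm w / a" using cb[OF vV'] apos by (simp add: field_simps)
      show "\<bar>w \<bullet> (-v0 + v)\<bar> \<le> M" using inner_bd vV' V'_def by auto
    qed (use apos in auto)
    finally show "c' v * (w \<bullet> (-v0 + v)) \<le> (norm w / a) * M" .
  qed
  also have "\<dots> = m * (norm w / a) * M" using cardV' by simp
  finally have sq: "(norm w)^2 \<le> norm w * (m * M / a)" by (simp add: algebra_simps)
  have wb: "norm w \<le> m * M / a"
  proof (cases "norm w = 0")
    case True
    thus ?thesis using apos xi0 unfolding M_def by simp
  next
    case False
    hence "norm w > 0" by simp
    moreover have "norm w * norm w \<le> norm w * (m * M / a)" using sq by (simp only: power2_eq_square)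
    ultimately show ?thesis using mult_le_cancel_left_pos by blast
  qed
  have "norm (x - F x) = norm w" unfolding w_def by (simp add: norm_minus_commute)
  also have "\<dots> \<le> m * M / a" by (rule wb)
  also have "\<dots> = 3 * \<xi> * L / (a / (real (card V - 1) * L))"
    unfolding M_def using assms(2) m_def Lpos apos by (simp add: field_simps power2_eq_square)
  finally show ?thesis unfolding L_def a_def simplex_thickness_def .
qed

end
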